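(* For the anonymous MIS algorithm described in the context, under the adversarial distributed daemon and from any initial configuration, the execution reaches a stable configuration (one in which no rule is enabled on any node) with probability $1$, whatever the strategy of the daemon.
   Context: $G=(V,E)$ is a finite simple undirected graph; $N(u)$ is the open neighbourhood of $u$. Nodes are anonymous. A configuration assigns to each node $u$ a value $s_u\in\{\bot,\top\}$. A rule "guard $\to$ command" is enabled on $u$ in $\gamma$ if its guard holds there. A transition $\gamma\xrightarrow{t}\gamma'$ is given by a nonempty set $t$ of moves $(u,r)$ with $r$ enabled on $u$ in $\gamma$, at most one per node, all executed simultaneously from the values in $\gamma$ with independent random choices; other nodes keep their values. An execution is a sequence of consecutive transitions, stopping only at a stable configuration. The adversarial distributed daemon may choose, at each step and depending on the whole past, any valid nonempty set $t$ (no fairness constraint). The algorithm has the rules: (Candidacy) $s_u=\bot\wedge\forall v\in N(u),\ s_v=\bot\ \to\ s_u:=\top$. (Withdrawal?) $s_u=\top\wedge\exists v\in N(u),\ s_v=\top\ \to$ with probability $\frac12$ (independently) set $s_u:=\bot$, otherwise leave it unchanged. *)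

theory Defs
  imports "HOL-Probability.Probability"
begin

text \<open>Graph: finite vertex type 'v, adjacency relation adj (assumed symmetric, irreflexive).
  Configuration: 'v \<Rightarrow> bool, where True encodes top and False encodes bot.\<close>

type_synonym 'v cfg = "'v \<Rightarrow> bool"

definition cand_en :: "('v \<Rightarrow> 'v \<Rightarrow> bool) \<Rightarrow> 'v cfg \<Rightarrow> 'v \<Rightarrow> bool" where
  "cand_en adj c u \<longleftrightarrow> \<not> c u \<and> (\<forall>v. adj u v \<longrightarrow> \<not> c v)"

definition wd_en :: "('v \<Rightarrow> 'v \<Rightarrow> bool) \<Rightarrow> 'v cfg \<Rightarrow> 'v \<Rightarrow> bool" where
  "wd_en adj c u \<longleftrightarrow> c u \<and> (\<exists>v. adj u v \<and> c v)"

definition enabled :: "('v \<Rightarrow> 'v \<Rightarrow> bool) \<Rightarrow> 'v cfg \<Rightarrow> 'v \<Rightarrow> bool" where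
  "enabled adj c u \<longleftrightarrow> cand_en adj c u \<or> wd_en adj c u"

definition stable :: "('v \<Rightarrow> 'v \<Rightarrow> bool) \<Rightarrow> 'v cfg \<Rightarrow> bool" where
  "stable adj c \<longleftrightarrow> (\<forall>u. \<not> enabled adj c u)"

text \<open>One transition: the set T of activated nodes execute their enabled rule
  simultaneously; coin u = True means the Withdrawal coin says "set to bot".\<close>
definition step :: "('v \<Rightarrow> 'v \<Rightarrow> bool) \<Rightarrow> 'v cfg \<Rightarrow> 'v set \<Rightarrow> ('v \<Rightarrow> bool) \<Rightarrow> 'v cfg" where
  "step adj c T coin = (\<lambda>u.
     if u \<in> T \<and> cand_en adj c u then True
     else if u \<in> T \<and> wd_en adj c u then \<not> coin u
     else c u)"

text \<open>A daemon strategy maps the whole history of configurations (oldest first,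
  last element = current configuration) to the set of activated nodes.\<close>
definition valid_daemon :: "('v \<Rightarrow> 'v \<Rightarrow> bool) \<Rightarrow> ('v cfg list \<Rightarrow> 'v set) \<Rightarrow> bool" where
  "valid_daemon adj \<sigma> \<longleftrightarrow>
     (\<forall>h. h \<noteq> [] \<and> \<not> stable adj (last h) \<longrightarrow>
          \<sigma> h \<noteq> {} \<and> \<sigma> h \<subseteq> {u. enabled adj (last h) u})"

definition coin_space :: "(nat \<times> 'v \<Rightarrow> bool) measure" where
  "coin_space = PiM UNIV (\<lambda>_. measure_pmf (bernoulli_pmf (1/2)))"

text \<open>History of the execution after n steps; once stable, it stays (execution stopped).\<close>
fun hist :: "('v \<Rightarrow> 'v \<Rightarrow> bool) \<Rightarrow> ('v cfg list \<Rightarrow> 'v set) \<Rightarrow> 'v cfg \<Rightarrow>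
             (nat \<times> 'v \<Rightarrow> bool) \<Rightarrow> nat \<Rightarrow> 'v cfg list" where
  "hist adj \<sigma> c0 \<omega> 0 = [c0]"
| "hist adj \<sigma> c0 \<omega> (Suc n) =
     (let h = hist adj \<sigma> c0 \<omega> n; c = last h in
      if stable adj c then h @ [c]
      else h @ [step adj c (\<sigma> h) (\<lambda>u. \<omega> (n, u))])"

definition config :: "('v \<Rightarrow> 'v \<Rightarrow> bool) \<Rightarrow> ('v cfg list \<Rightarrow> 'v set) \<Rightarrow> 'v cfg \<Rightarrow>
             (nat \<times> 'v \<Rightarrow> bool) \<Rightarrow> nat \<Rightarrow> 'v cfg" where
  "config adj \<sigma> c0 \<omega> n = last (hist adj \<sigma> c0 \<omega> n)"

end

theory Submission imports Defs "HOL-Library.Cardinality" begin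

definition rk :: "'v::finite \<Rightarrow> nat" where "rk = to_nat"

lemma inj_rk: "inj rk" unfolding rk_def by (rule inj_to_nat)

definition grow :: "('v::finite \<Rightarrow> 'v \<Rightarrow> bool) \<Rightarrow> 'v cfg \<Rightarrow> 'v set \<Rightarrow> ('v \<Rightarrow> bool)" where
  "grow adj c T = (\<lambda>u. \<exists>w. adj u w \<and> c w \<and> (w \<notin> T \<or> rk u < rk w))"

definition Rel :: "('v \<Rightarrow> 'v \<Rightarrow> bool) \<Rightarrow> 'v cfg \<Rightarrow> ('v \<times> 'v) set" where
  "Rel adj c = {(u,v). c u \<and> c v \<and> adj u v}"

definition comps :: "('v \<Rightarrow> 'v \<Rightarrow> bool) \<Rightarrow> 'v cfg \<Rightarrow> 'v set set" where
  "comps adj c = (\<lambda>u. (Rel adj c)\<^sup>* `` {u}) ` {u. c u}"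

definition pot :: "('v::finite \<Rightarrow> 'v \<Rightarrow> bool) \<Rightarrow> 'v cfg \<Rightarrow> nat" where
  "pot adj c = (CARD('v) - card (comps adj c)) * (CARD('v) + 1) + card {u. c u}"

lemma rtrancl_top: "(a,b) \<in> (Rel adj c)\<^sup>* \<Longrightarrow> c a \<Longrightarrow> c b"
  by (induction rule: rtrancl_induct) (auto simp: Rel_def)

lemma sym_Rel: "\<forall>u v. adj u v \<longleftrightarrow> adj v u \<Longrightarrow> sym (Rel adj c)"
  unfolding sym_def Rel_def by auto

lemma class_eq:
  assumes "sym r" "(a,b) \<in> r\<^sup>*" shows "r\<^sup>* `` {a} = r\<^sup>* `` {b}"
proof -
  have s: "sym (r\<^sup>*)" using assms(1) by (rule sym_rtrancl)
  have ba: "(b,a) \<in> r\<^sup>*" using s assms(2) by (auto simp: sym_def)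
  show ?thesis using assms(2) ba by (auto intro: rtrancl_trans)
qed

lemma card_comps_le: "card (comps adj (c::'v::finite cfg)) \<le> CARD('v)"
proof -
  have "card (comps adj c) \<le> card {u. c u}" unfolding comps_def by (rule card_image_le) simp
  also have "\<dots> \<le> CARD('v)" by (rule card_mono) auto
  finally show ?thesis .
qed

lemma pot_decr:
  fixes adj :: "'v::finite \<Rightarrow> 'v \<Rightarrow> bool"
  assumes sym: "\<forall>u v. adj u v \<longleftrightarrow> adj v u" and irr: "\<forall>u. \<not> adj u u"
    and Tne: "T \<noteq> {}" and Ten: "T \<subseteq> {u. enabled adj c u}"
  shows "pot adj (step adj c T (grow adj c T)) < pot adj c"
proof -
  define c' where "c' = step adj c T (grow adj c T)"
  define g where "g = grow adj c T"
  define Cn where "Cn = {u \<in> T. cand_en adj c u}"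
  have c'_iff: "c' u \<longleftrightarrow> (c u \<and> \<not>(u \<in> T \<and> g u)) \<or> u \<in> Cn" for u
  proof (cases "u \<in> T")
    case True
    then have "enabled adj c u" using Ten by auto
    then show ?thesis using True
      unfolding c'_def step_def Cn_def g_def enabled_def cand_en_def wd_en_def by auto
  qed (auto simp: c'_def step_def Cn_def)
  have noedge: "\<not> c y" if "x \<in> Cn" "adj x y" for x y
    using that sym unfolding Cn_def cand_en_def by auto
  have candnot: "\<not> c x" if "x \<in> Cn" for x using that unfolding Cn_def cand_en_def by auto
  have L1: "(a,b) \<in> (Rel adj c)\<^sup>* \<and> c b" if "(a,b) \<in> (Rel adj c')\<^sup>*" "c a" for a b
    using that
  proof (induction rule: rtrancl_induct)
    case base then show ?case by simp
  next
    case (step b d)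
    then have cb: "c b" and ab: "(a,b) \<in> (Rel adj c)\<^sup>*" by auto
    from step.hyps(2) have c'd: "c' d" and bd: "adj b d" by (auto simp: Rel_def)
    have "d \<notin> Cn" using noedge[of d b] bd sym cb by auto
    then have "c d" using c'd c'_iff by auto
    then have "(b,d) \<in> Rel adj c" using cb bd by (auto simp: Rel_def)
    then show ?case using ab \<open>c d\<close> by (auto intro: rtrancl_into_rtrancl)
  qed
  have L2: "b \<in> Cn" if "(a,b) \<in> (Rel adj c')\<^sup>*" "a \<in> Cn" for a b
    using that
  proof (induction rule: rtrancl_induct)
    case base then show ?case by simp
  next
    case (step b d)
    then have bC: "b \<in> Cn" by auto
    from step.hyps(2) have c'd: "c' d" and bd: "adj b d" by (auto simp: Rel_def)
    show ?case
    proof (rule ccontr)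
      assume "d \<notin> Cn"
      then have "c d" using c'd c'_iff by auto
      then show False using noedge[OF bC bd] by simp
    qed
  qed
  have symR: "sym (Rel adj c)" using sym_Rel[OF sym] .
  have surv: "\<exists>s \<in> (Rel adj c)\<^sup>* `` {u}. c' s \<and> c s" if cu: "c u" for u
  proof -
    define Q where "Q = (Rel adj c)\<^sup>* `` {u}"
    have uQ: "u \<in> Q" unfolding Q_def by simp
    have fin: "finite (rk ` Q)" by simp
    have ne: "rk ` Q \<noteq> {}" using uQ by auto
    obtain m where mQ: "m \<in> Q" and mmax: "rk m = Max (rk ` Q)"
      using Max_in[OF fin ne] by auto
    have mx: "rk q \<le> rk m" if "q \<in> Q" for q using Max_ge[OF fin] that mmax by auto
    have topQ: "c q" if "q \<in> Q" for q using that cu rtrancl_top unfolding Q_def by fastforce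
    show ?thesis
    proof (cases "m \<in> T \<and> g m")
      case True
      then obtain w where w: "adj m w" "c w" "w \<notin> T \<or> rk m < rk w"
        unfolding g_def grow_def by auto
      have "(m,w) \<in> Rel adj c" using w topQ[OF mQ] by (auto simp: Rel_def)
      then have wQ: "w \<in> Q" using mQ unfolding Q_def by (auto intro: rtrancl_into_rtrancl)
      then have "w \<notin> T" using mx[OF wQ] w(3) by auto
      then have "c' w" using c'_iff w(2) by auto
      then show ?thesis using wQ w(2) unfolding Q_def by auto
    next
      case False
      then have "c' m" using c'_iff topQ[OF mQ] by auto
      then show ?thesis using mQ topQ[OF mQ] unfolding Q_def by auto
    qed
  qed
  define sv where "sv Q = (SOME s. s \<in> Q \<and> c' s \<and> c s)" for Q
  have sv: "sv Q \<in> Q \<and> c' (sv Q) \<and> c (sv Q)" if Qin: "Q \<in> comps adj c" for Q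
  proof -
    obtain u where "c u" "Q = (Rel adj c)\<^sup>* `` {u}" using Qin unfolding comps_def by blast
    then have "\<exists>s. s \<in> Q \<and> c' s \<and> c s" using surv by auto
    then show ?thesis unfolding sv_def by (rule someI_ex)
  qed
  define F where "F Q = (Rel adj c')\<^sup>* `` {sv Q}" for Q
  have Fsub: "F ` comps adj c \<subseteq> comps adj c'"
    using sv unfolding F_def comps_def by auto
  have Finj: "inj_on F (comps adj c)"
  proof (rule inj_onI)
    fix Q1 Q2 assume Q1: "Q1 \<in> comps adj c" and Q2: "Q2 \<in> comps adj c" and eq: "F Q1 = F Q2"
    obtain u1 where u1: "Q1 = (Rel adj c)\<^sup>* `` {u1}" using Q1 unfolding comps_def by auto
    obtain u2 where u2: "Q2 = (Rel adj c)\<^sup>* `` {u2}" using Q2 unfolding comps_def by auto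
    have "sv Q2 \<in> F Q1" using eq unfolding F_def by auto
    then have "(sv Q1, sv Q2) \<in> (Rel adj c')\<^sup>*" unfolding F_def by auto
    then have s12: "(sv Q1, sv Q2) \<in> (Rel adj c)\<^sup>*" using L1 sv[OF Q1] by blast
    have a1: "(u1, sv Q1) \<in> (Rel adj c)\<^sup>*" using sv[OF Q1] u1 by auto
    have a2: "(u2, sv Q2) \<in> (Rel adj c)\<^sup>*" using sv[OF Q2] u2 by auto
    have "(u1, sv Q2) \<in> (Rel adj c)\<^sup>*" using a1 s12 by (rule rtrancl_trans)
    then have "Q1 = (Rel adj c)\<^sup>* `` {sv Q2}" using u1 class_eq[OF symR] by auto
    also have "\<dots> = Q2" using u2 class_eq[OF symR a2] by auto
    finally show "Q1 = Q2" .
  qed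
  have fin': "finite (comps adj c')" by simp
  have cardF: "card (F ` comps adj c) = card (comps adj c)" using card_image[OF Finj] .
  define N where "N = CARD('v)"
  have b1: "card (comps adj c') \<le> N" unfolding N_def by (rule card_comps_le)
  have b0: "card (comps adj c) \<le> N" unfolding N_def by (rule card_comps_le)
  have tb: "card {u. c' u} \<le> N" unfolding N_def by (rule card_mono) auto
  show ?thesis
  proof (cases "Cn = {}")
    case False
    then obtain x where xC: "x \<in> Cn" by auto
    have c'x: "c' x" using c'_iff xC by auto
    define X where "X = (Rel adj c')\<^sup>* `` {x}"
    have Xin: "X \<in> comps adj c'" using c'x unfolding X_def comps_def by auto
    have Xn: "X \<notin> F ` comps adj c"
    proof
      assume "X \<in> F ` comps adj c"
      then obtain Q where Q: "Q \<in> comps adj c" "X = F Q" by auto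
      have "sv Q \<in> X" using Q(2) unfolding F_def by auto
      then have "sv Q \<in> Cn" using L2 xC unfolding X_def by auto
      then show False using candnot sv[OF Q(1)] by auto
    qed
    have "card (insert X (F ` comps adj c)) \<le> card (comps adj c')"
      by (rule card_mono[OF fin']) (use Xin Fsub in auto)
    then have lt: "card (comps adj c) + 1 \<le> card (comps adj c')"
      using Xn cardF by (simp add: card_insert_if)
    define a where "a = N - card (comps adj c')"
    define b where "b = N - card (comps adj c)"
    have ab: "a + 1 \<le> b" using lt b1 unfolding a_def b_def by linarith
    have "pot adj c' = a * (N+1) + card {u. c' u}" unfolding pot_def a_def N_def by simp
    also have "\<dots> < (a+1) * (N+1)" using tb by simp
    also have "\<dots> \<le> b * (N+1)" using ab by (intro mult_right_mono) auto
    also have "\<dots> \<le> pot adj c" unfolding pot_def b_def N_def by simp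
    finally show ?thesis unfolding c'_def .
  next
    case True
    have "card (comps adj c) \<le> card (comps adj c')"
      using card_mono[OF fin' Fsub] cardF by simp
    then have m1: "(N - card (comps adj c')) * (N+1) \<le> (N - card (comps adj c)) * (N+1)"
      by (intro mult_right_mono) auto
    have fT: "finite (rk ` T)" by simp
    have neT: "rk ` T \<noteq> {}" using Tne by auto
    obtain u0 where u0T: "u0 \<in> T" and u0min: "rk u0 = Min (rk ` T)"
      using Min_in[OF fT neT] by auto
    have mn: "rk u0 \<le> rk q" if "q \<in> T" for q using Min_le[OF fT] that u0min by auto
    have en: "enabled adj c u0" using u0T Ten by auto
    have "u0 \<notin> Cn" using True by auto
    then have wd: "wd_en adj c u0" using en u0T unfolding enabled_def Cn_def by auto
    then obtain w where w: "adj u0 w" "c w" and cu0: "c u0" unfolding wd_en_def by auto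
    have "w \<noteq> u0" using w(1) irr by auto
    then have "rk w \<noteq> rk u0" using inj_rk by (auto dest: injD)
    then have "w \<notin> T \<or> rk u0 < rk w" using mn[of w] by auto
    then have gu0: "g u0" unfolding g_def grow_def using w by auto
    have nc'u0: "\<not> c' u0" using c'_iff gu0 u0T True by auto
    have sub: "{u. c' u} \<subset> {u. c u}" using c'_iff True nc'u0 cu0 by auto
    have "card {u. c' u} < card {u. c u}" by (rule psubset_card_mono) (use sub in auto)
    then show ?thesis using m1 unfolding pot_def c'_def[symmetric] N_def by linarith
  qed
qed

lemma pot_le: "pot adj (c::'v::finite cfg) \<le> CARD('v) * (CARD('v) + 1) + CARD('v)"
proof -
  have "card {u. c u} \<le> CARD('v)" by (rule card_mono) auto
  moreover have "(CARD('v) - card (comps adj c)) * (CARD('v) + 1) \<le> CARD('v) * (CARD('v) + 1)"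
    by (intro mult_right_mono) auto
  ultimately show ?thesis unfolding pot_def by linarith
qed


definition ext :: "('v \<Rightarrow> 'v \<Rightarrow> bool) \<Rightarrow> ('v cfg list \<Rightarrow> 'v set) \<Rightarrow> 'v cfg list \<Rightarrow> ('v \<Rightarrow> bool) \<Rightarrow> 'v cfg list" where
  "ext adj \<sigma> h r = (if stable adj (last h) then h @ [last h] else h @ [step adj (last h) (\<sigma> h) r])"

fun run :: "('v \<Rightarrow> 'v \<Rightarrow> bool) \<Rightarrow> ('v cfg list \<Rightarrow> 'v set) \<Rightarrow> 'v cfg list \<Rightarrow> ('v \<Rightarrow> bool) list \<Rightarrow> 'v cfg list" where
  "run adj \<sigma> h [] = h"
| "run adj \<sigma> h (r # rs) = run adj \<sigma> (ext adj \<sigma> h r) rs"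

lemma run_snoc: "run adj \<sigma> h (rs @ [r]) = ext adj \<sigma> (run adj \<sigma> h rs) r"
  by (induction rs arbitrary: h) auto

lemma hist_run: "hist adj \<sigma> c0 \<omega> n = run adj \<sigma> [c0] (map (\<lambda>i u. \<omega> (i,u)) [0..<n])"
  by (induction n) (simp_all add: run_snoc ext_def Let_def)

lemma ext_ne: "ext adj \<sigma> h r \<noteq> []" by (simp add: ext_def)

lemma run_stable: "stable adj (last h) \<Longrightarrow> last (run adj \<sigma> h rs) = last h"
  by (induction rs arbitrary: h) (simp_all add: ext_def)

definition bad :: "('v::finite \<Rightarrow> 'v \<Rightarrow> bool) \<Rightarrow> ('v cfg list \<Rightarrow> 'v set) \<Rightarrow> nat \<Rightarrow> 'v cfg list \<Rightarrow> nat" where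
  "bad adj \<sigma> k h = card {rs. length rs = k \<and> \<not> stable adj (last (run adj \<sigma> h rs))}"

lemma finite_len: "finite {rs :: ('v::finite \<Rightarrow> bool) list. length rs = k}"
  using finite_lists_length_eq[of "UNIV :: ('v \<Rightarrow> bool) set" k] by simp

lemma card_len: "card {rs :: ('v::finite \<Rightarrow> bool) list. length rs = k} = CARD('v \<Rightarrow> bool) ^ k"
  using card_lists_length_eq[of "UNIV :: ('v \<Rightarrow> bool) set" k] by simp

lemma bad_Suc: "bad adj \<sigma> (Suc k) h = (\<Sum>r\<in>UNIV. bad adj \<sigma> k (ext adj \<sigma> h r))"
proof -
  let ?P = "\<lambda>h rs. \<not> stable adj (last (run adj \<sigma> h rs))"
  have eq: "{rs. length rs = Suc k \<and> ?P h rs} = (\<Union>r. (\<lambda>rs. r # rs) ` {rs. length rs = k \<and> ?P (ext adj \<sigma> h r) rs})"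
    by (auto simp: length_Suc_conv image_iff)
  have "card (\<Union>r. (\<lambda>rs. r # rs) ` {rs. length rs = k \<and> ?P (ext adj \<sigma> h r) rs})
      = (\<Sum>r\<in>UNIV. card ((\<lambda>rs. r # rs) ` {rs. length rs = k \<and> ?P (ext adj \<sigma> h r) rs}))"
    by (rule card_UN_disjoint) (auto intro: finite_subset[OF _ finite_len])
  also have "\<dots> = (\<Sum>r\<in>UNIV. bad adj \<sigma> k (ext adj \<sigma> h r))"
    unfolding bad_def by (intro sum.cong refl card_image) (auto intro: inj_onI)
  finally show ?thesis unfolding bad_def eq .
qed

lemma bad_0: "bad adj \<sigma> 0 h = (if stable adj (last h) then 0 else 1)"
proof -
  have "{rs. length rs = 0 \<and> \<not> stable adj (last (run adj \<sigma> h rs))} = (if stable adj (last h) then {} else {[]})"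
    by auto
  then show ?thesis unfolding bad_def by simp
qed

lemma bad_stable: "stable adj (last h) \<Longrightarrow> bad adj \<sigma> k h = 0"
  unfolding bad_def using run_stable[of adj h \<sigma>] by auto

lemma bad_mult:
  assumes "\<forall>h'. h' \<noteq> [] \<longrightarrow> bad adj \<sigma> b h' \<le> M"
  shows "h \<noteq> [] \<Longrightarrow> bad adj \<sigma> (a + b) h \<le> bad adj \<sigma> a h * M"
proof (induction a arbitrary: h)
  case 0
  show ?case
  proof (cases "stable adj (last h)")
    case True then show ?thesis using bad_stable[OF True] by simp
  next
    case False then show ?thesis using assms 0 bad_0[of adj \<sigma> h] by simp
  qed
next
  case (Suc a)
  have "bad adj \<sigma> (Suc a + b) h = (\<Sum>r\<in>UNIV. bad adj \<sigma> (a + b) (ext adj \<sigma> h r))"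
    using bad_Suc by simp
  also have "\<dots> \<le> (\<Sum>r\<in>UNIV. bad adj \<sigma> a (ext adj \<sigma> h r) * M)"
    by (intro sum_mono Suc.IH ext_ne)
  also have "\<dots> = bad adj \<sigma> (Suc a) h * M"
    by (simp add: bad_Suc sum_distrib_right)
  finally show ?case .
qed

lemma good_exists:
  fixes adj :: "'v::finite \<Rightarrow> 'v \<Rightarrow> bool"
  assumes sym: "\<forall>u v. adj u v \<longleftrightarrow> adj v u" and irr: "\<forall>u. \<not> adj u u"
    and val: "valid_daemon adj \<sigma>"
  shows "h \<noteq> [] \<Longrightarrow> pot adj (last h) \<le> k \<Longrightarrow> \<exists>rs. length rs = k \<and> stable adj (last (run adj \<sigma> h rs))"
proof (induction k arbitrary: h)
  case 0
  show ?case
  proof (cases "stable adj (last h)")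
    case True then show ?thesis by (intro exI[of _ "[]"]) simp
  next
    case False
    then have "\<sigma> h \<noteq> {} \<and> \<sigma> h \<subseteq> {u. enabled adj (last h) u}" using val 0 unfolding valid_daemon_def by auto
    then have "pot adj (step adj (last h) (\<sigma> h) (grow adj (last h) (\<sigma> h))) < pot adj (last h)"
      using pot_decr[OF sym irr] by blast
    then show ?thesis using 0 by simp
  qed
next
  case (Suc k)
  show ?case
  proof (cases "stable adj (last h)")
    case True then show ?thesis
      by (intro exI[of _ "replicate (Suc k) (\<lambda>_. False)"]) (simp add: run_stable ext_def)
  next
    case False
    then have "\<sigma> h \<noteq> {} \<and> \<sigma> h \<subseteq> {u. enabled adj (last h) u}" using val Suc.prems unfolding valid_daemon_def by auto
    then have lt: "pot adj (step adj (last h) (\<sigma> h) (grow adj (last h) (\<sigma> h))) < pot adj (last h)"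
      using pot_decr[OF sym irr] by blast
    define r where "r = grow adj (last h) (\<sigma> h)"
    have "last (ext adj \<sigma> h r) = step adj (last h) (\<sigma> h) r" using False by (simp add: ext_def)
    then have "pot adj (last (ext adj \<sigma> h r)) \<le> k" using lt Suc.prems unfolding r_def by simp
    then obtain rs where "length rs = k" "stable adj (last (run adj \<sigma> (ext adj \<sigma> h r) rs))"
      using Suc.IH[OF ext_ne] by blast
    then show ?thesis by (intro exI[of _ "r # rs"]) simp
  qed
qed

definition KK :: "'v::finite itself \<Rightarrow> nat" where "KK _ = CARD('v) * (CARD('v) + 1) + CARD('v)"

lemma bad_K:
  fixes adj :: "'v::finite \<Rightarrow> 'v \<Rightarrow> bool"
  assumes sym: "\<forall>u v. adj u v \<longleftrightarrow> adj v u" and irr: "\<forall>u. \<not> adj u u"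
    and val: "valid_daemon adj \<sigma>" and False: "h \<noteq> []"
  shows "bad adj \<sigma> (KK TYPE('v)) h \<le> CARD('v \<Rightarrow> bool) ^ KK TYPE('v) - 1"
proof -
  obtain rs where rs: "length rs = KK TYPE('v)" "stable adj (last (run adj \<sigma> h rs))"
    using good_exists[OF sym irr val False pot_le[of adj "last h"]] unfolding KK_def by blast
  have "{rs. length rs = KK TYPE('v) \<and> \<not> stable adj (last (run adj \<sigma> h rs))} \<subset> {rs. length rs = KK TYPE('v)}"
    using rs by auto
  then have "bad adj \<sigma> (KK TYPE('v)) h < card {rs :: ('v \<Rightarrow> bool) list. length rs = KK TYPE('v)}"
    unfolding bad_def by (intro psubset_card_mono finite_len)
  then show ?thesis unfolding card_len by simp
qed


lemma bad_mK:
  fixes adj :: "'v::finite \<Rightarrow> 'v \<Rightarrow> bool"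
  assumes sym: "\<forall>u v. adj u v \<longleftrightarrow> adj v u" and irr: "\<forall>u. \<not> adj u u"
    and val: "valid_daemon adj \<sigma>"
  shows "\<forall>h. h \<noteq> [] \<longrightarrow> bad adj \<sigma> (m * KK TYPE('v)) h \<le> (CARD('v \<Rightarrow> bool) ^ KK TYPE('v) - 1) ^ m"
proof (induction m)
  case 0
  show ?case by (simp add: bad_0)
next
  case (Suc m)
  show ?case
  proof (intro allI impI)
    fix h :: "'v cfg list" assume h: "h \<noteq> []"
    have "bad adj \<sigma> (Suc m * KK TYPE('v)) h = bad adj \<sigma> (KK TYPE('v) + m * KK TYPE('v)) h" by simp
    also have "\<dots> \<le> bad adj \<sigma> (KK TYPE('v)) h * (CARD('v \<Rightarrow> bool) ^ KK TYPE('v) - 1) ^ m"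
      by (rule bad_mult[OF Suc h])
    also have "\<dots> \<le> (CARD('v \<Rightarrow> bool) ^ KK TYPE('v) - 1) * (CARD('v \<Rightarrow> bool) ^ KK TYPE('v) - 1) ^ m"
      by (intro mult_right_mono bad_K[OF sym irr val h]) simp
    finally show "bad adj \<sigma> (Suc m * KK TYPE('v)) h \<le> (CARD('v \<Rightarrow> bool) ^ KK TYPE('v) - 1) ^ Suc m" by simp
  qed
qed

abbreviation BM :: "bool measure" where "BM \<equiv> measure_pmf (bernoulli_pmf (1/2))"

definition cyl :: "('v::finite \<Rightarrow> bool) list \<Rightarrow> (nat \<times> 'v \<Rightarrow> bool) set" where
  "cyl rs = prod_emb UNIV (\<lambda>_. BM) ({..<length rs} \<times> UNIV) (PiE ({..<length rs} \<times> UNIV) (\<lambda>j. {(rs ! fst j) (snd j)}))"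

lemma space_coin: "space coin_space = UNIV"
  unfolding coin_space_def by (simp add: space_PiM)

lemma cyl_mem: "\<omega> \<in> cyl rs \<longleftrightarrow> (\<forall>j\<in>{..<length rs} \<times> UNIV. \<omega> j = (rs ! fst j) (snd j))"
  unfolding cyl_def prod_emb_def by (simp add: restrict_PiE_iff Pi_iff)

lemma prefix_iff: "map (\<lambda>i u. \<omega> (i,u)) [0..<length rs] = rs \<longleftrightarrow> (\<forall>j\<in>{..<length rs} \<times> UNIV. \<omega> j = (rs ! fst j) (snd j))"
proof -
  have "map (\<lambda>i u. \<omega> (i,u)) [0..<length rs] = rs \<longleftrightarrow> map (\<lambda>i u. \<omega> (i,u)) [0..<length rs] = map (\<lambda>i. rs ! i) [0..<length rs]"
    by (simp only: map_nth)
  also have "\<dots> \<longleftrightarrow> (\<forall>i\<in>set [0..<length rs]. (\<lambda>u. \<omega> (i,u)) = rs ! i)"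
    by (rule map_eq_conv)
  also have "\<dots> \<longleftrightarrow> (\<forall>i<length rs. (\<lambda>u. \<omega> (i,u)) = rs ! i)"
    by (simp add: atLeast0LessThan Ball_def)
  also have "\<dots> \<longleftrightarrow> (\<forall>i<length rs. \<forall>u. \<omega> (i,u) = (rs ! i) u)"
    by (simp only: fun_eq_iff)
  also have "\<dots> \<longleftrightarrow> (\<forall>j\<in>{..<length rs} \<times> UNIV. \<omega> j = (rs ! fst j) (snd j))"
    by (simp add: Ball_def)
  finally show ?thesis .
qed

lemma cyl_eq: "\<omega> \<in> cyl rs \<longleftrightarrow> map (\<lambda>i u. \<omega> (i,u)) [0..<length rs] = rs"
  unfolding cyl_mem prefix_iff by (rule refl)

lemma cyl_sets: "cyl rs \<in> sets coin_space"
  unfolding cyl_def coin_space_def by (rule sets_PiM_I) auto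

lemma cyl_meas: "measure coin_space (cyl (rs :: ('v::finite \<Rightarrow> bool) list)) = (1/2) ^ (length rs * CARD('v))"
proof -
  have "emeasure coin_space (cyl rs) = (\<Prod>j\<in>{..<length rs} \<times> (UNIV::'v set). emeasure BM {(rs ! fst j) (snd j)})"
    unfolding coin_space_def cyl_def
    by (rule emeasure_PiM_emb) (auto simp: prob_space_measure_pmf)
  also have "\<dots> = (\<Prod>j\<in>{..<length rs} \<times> (UNIV::'v set). ennreal (1/2))"
    by (intro prod.cong refl) (auto simp: emeasure_pmf_single pmf_bernoulli_True pmf_bernoulli_False)
  also have "\<dots> = ennreal (1/2) ^ (length rs * CARD('v))"
    by (simp add: card_cartesian_product)
  also have "\<dots> = ennreal ((1/2) ^ (length rs * CARD('v)))"
    by (rule ennreal_power) simp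
  finally show ?thesis by (intro measure_eq_emeasure_eq_ennreal) auto
qed


theorem mainTheorem18:
  fixes adj :: "'v::finite \<Rightarrow> 'v \<Rightarrow> bool"
    and \<sigma> :: "'v cfg list \<Rightarrow> 'v set"
    and c0 :: "'v cfg"
  assumes "\<forall>u v. adj u v \<longleftrightarrow> adj v u"
    and "\<forall>u. \<not> adj u u"
    and "valid_daemon adj \<sigma>"
  shows "{\<omega> \<in> space coin_space. \<exists>n. stable adj (config adj \<sigma> c0 \<omega> n)} \<in> sets coin_space
       \<and> measure coin_space {\<omega> \<in> space coin_space. \<exists>n. stable adj (config adj \<sigma> c0 \<omega> n)} = 1"
proof -
  note sym = assms(1) and irr = assms(2) and val = assms(3)
  interpret P: prob_space coin_space
    unfolding coin_space_def by (intro prob_space_PiM prob_space_measure_pmf)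
  define N where "N = CARD('v)"
  define K where "K = KK TYPE('v)"
  define R where "R = CARD('v \<Rightarrow> bool)"
  define A where "A = {\<omega> \<in> space coin_space. \<exists>n. stable adj (config adj \<sigma> c0 \<omega> n)}"
  define E where "E n = {\<omega> \<in> space coin_space. \<not> stable adj (config adj \<sigma> c0 \<omega> n)}" for n
  define Bs where "Bs n = {rs. length rs = n \<and> \<not> stable adj (last (run adj \<sigma> [c0] rs))}" for n
  have E_eq: "E n = (\<Union>rs\<in>Bs n. cyl rs)" for n
  proof (rule set_eqI)
    fix \<omega> :: "nat \<times> 'v \<Rightarrow> bool"
    define p where "p = map (\<lambda>i u. \<omega> (i,u)) [0..<n]"
    have lp: "length p = n" unfolding p_def by simp
    have "\<omega> \<in> E n \<longleftrightarrow> p \<in> Bs n" unfolding E_def Bs_def config_def hist_run space_coin p_def by simp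
    also have "\<dots> \<longleftrightarrow> (\<exists>rs\<in>Bs n. \<omega> \<in> cyl rs)"
    proof
      assume "p \<in> Bs n"
      moreover have "\<omega> \<in> cyl p" using cyl_eq[of \<omega> p] lp unfolding p_def by simp
      ultimately show "\<exists>rs\<in>Bs n. \<omega> \<in> cyl rs" by blast
    next
      assume "\<exists>rs\<in>Bs n. \<omega> \<in> cyl rs"
      then obtain rs where rs: "rs \<in> Bs n" "\<omega> \<in> cyl rs" by blast
      have "length rs = n" using rs(1) unfolding Bs_def by simp
      then have "p = rs" using cyl_eq[of \<omega> rs] rs(2) unfolding p_def by simp
      then show "p \<in> Bs n" using rs(1) by simp
    qed
    finally show "\<omega> \<in> E n \<longleftrightarrow> \<omega> \<in> (\<Union>rs\<in>Bs n. cyl rs)" by simp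
  qed
  have finB: "finite (Bs n)" for n
    unfolding Bs_def by (rule finite_subset[OF _ finite_len[of n]]) auto
  have disj: "disjoint_family_on cyl (Bs n)" for n
  proof (unfold disjoint_family_on_def, intro ballI impI)
    fix rs1 rs2 assume r: "rs1 \<in> Bs n" "rs2 \<in> Bs n" "rs1 \<noteq> rs2"
    have l: "length rs1 = n" "length rs2 = n" using r unfolding Bs_def by auto
    show "cyl rs1 \<inter> cyl rs2 = {}"
    proof (rule equals0I)
      fix \<omega> assume "\<omega> \<in> cyl rs1 \<inter> cyl rs2"
      then have "map (\<lambda>i u. \<omega> (i,u)) [0..<n] = rs1" "map (\<lambda>i u. \<omega> (i,u)) [0..<n] = rs2"
        using cyl_eq[of \<omega> rs1] cyl_eq[of \<omega> rs2] l by auto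
      then show False using r(3) by simp
    qed
  qed
  have Esets: "E n \<in> sets coin_space" for n
    unfolding E_eq using finB by (intro sets.finite_UN cyl_sets) auto
  have Emeas: "measure coin_space (E n) = real (bad adj \<sigma> n [c0]) * (1/2) ^ (n * N)" for n
  proof -
    have "measure coin_space (E n) = (\<Sum>rs\<in>Bs n. measure coin_space (cyl rs))"
      unfolding E_eq by (rule P.finite_measure_finite_Union[OF finB _ disj]) (auto intro: cyl_sets)
    also have "\<dots> = (\<Sum>rs\<in>Bs n. (1/2) ^ (n * N))"
      using cyl_meas unfolding Bs_def N_def by (intro sum.cong refl) auto
    also have "\<dots> = real (card (Bs n)) * (1/2) ^ (n * N)" by simp
    finally show ?thesis unfolding Bs_def bad_def by simp
  qed
  have A_eq: "A = (\<Union>n. space coin_space - E n)"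
    unfolding A_def E_def by auto
  have Asets: "A \<in> sets coin_space"
    unfolding A_eq using Esets by auto
  have Npos: "0 < N" unfolding N_def by simp
  have R2: "R = 2 ^ N" unfolding R_def N_def by (simp add: card_fun)
  define q :: real where "q = (1/2) ^ (K * N)"
  have qpos: "0 < q" unfolding q_def by simp
  have Rq: "real R ^ K * q = 1"
    unfolding q_def R2 by (simp add: power_mult[symmetric] power_mult_distrib[symmetric] mult.commute)
  have RK1: "1 \<le> R ^ K" unfolding R2 by simp
  have q1: "q \<le> 1" unfolding q_def by (simp add: power_le_one)
  have bnd: "1 - (1 - q) ^ m \<le> measure coin_space A" for m
  proof -
    have b: "bad adj \<sigma> (m * K) [c0] \<le> (R ^ K - 1) ^ m"
      using bad_mK[OF sym irr val, of m] unfolding K_def R_def by auto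
    have "real (bad adj \<sigma> (m * K) [c0]) \<le> (real R ^ K - 1) ^ m"
    proof -
      have "real (bad adj \<sigma> (m * K) [c0]) \<le> real ((R ^ K - 1) ^ m)" using b by (simp only: of_nat_le_iff)
      also have "\<dots> = (real R ^ K - 1) ^ m" using RK1 by (simp add: of_nat_diff)
      finally show ?thesis .
    qed
    then have "measure coin_space (E (m * K)) \<le> (real R ^ K - 1) ^ m * q ^ m"
    proof -
      have pw: "q ^ m = (1/2::real) ^ (m * K * N)"
        unfolding q_def by (simp add: power_mult[symmetric] ac_simps)
      show ?thesis unfolding Emeas pw using \<open>real (bad adj \<sigma> (m * K) [c0]) \<le> (real R ^ K - 1) ^ m\<close>
        by (intro mult_right_mono) auto
    qed
    also have "\<dots> = ((real R ^ K - 1) * q) ^ m" by (simp add: power_mult_distrib)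
    also have "(real R ^ K - 1) * q = 1 - q" using Rq by (simp add: algebra_simps)
    finally have e: "measure coin_space (E (m * K)) \<le> (1 - q) ^ m" .
    have "measure coin_space (space coin_space - E (m * K)) = 1 - measure coin_space (E (m * K))"
      using P.prob_compl[OF Esets] .
    moreover have "measure coin_space (space coin_space - E (m * K)) \<le> measure coin_space A"
      by (rule P.finite_measure_mono) (use Asets A_eq in auto)
    ultimately show ?thesis using e by linarith
  qed
  have "measure coin_space A = 1"
  proof (rule ccontr)
    assume ne: "measure coin_space A \<noteq> 1"
    have le1: "measure coin_space A \<le> 1" by (rule P.prob_le_1)
    have "measure coin_space A < 1" using le1 ne by (rule order_le_neq_trans)
    then have "0 < 1 - measure coin_space A" by simp
    moreover have "1 - q < 1" using qpos by simp
    ultimately obtain m where "(1 - q) ^ m < 1 - measure coin_space A"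
      using real_arch_pow_inv by blast
    then show False using bnd[of m] by linarith
  qed
  then show ?thesis using Asets unfolding A_def by simp
qed

end
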